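(* Let $(M^*,p^* )$ be a non-compact model surface of revolution with metric $dt^2+m(t)^2d\theta^2$, where $m$ satisfies $m''(t)+K(t)m(t)=0$, $m(0)=0$, $m'(0)=1$. If $K(t)\le 0$ on $[0,\infty)$ and $\int_0^\infty t\,K(t)\,dt>-\infty$, then $M^*$ admits a finite total curvature.
   Context: A non-compact model surface of revolution is $\mathbb{R}^2$ with the metric $dt^2+m(t)^2d\theta^2$, where $(t,\theta)$ are polar coordinates about the origin and $m:(0,\infty)\to(0,\infty)$ is smooth, extends to a smooth odd function around $0$, and satisfies $m'(0)=1$; its Gauss curvature is $K=-m''/m$. The total curvature is $\int K_+\,dA+\int K_-\,dA$ ($K_+=\max\{K,0\}$, $K_-=\min\{K,0\}$, $dA=m(t)\,dt\,d\theta$ the area element), and it is finite if both integrals are finite. *)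

theory Defs
  imports "HOL-Analysis.Analysis"
begin

definition smooth_real :: "(real \<Rightarrow> real) \<Rightarrow> bool" where
  "smooth_real f \<longleftrightarrow> (\<forall>n x. ((deriv ^^ n) f) differentiable (at x))"

text \<open>Warping function of a non-compact model surface of revolution
  dt^2 + m(t)^2 dtheta^2 on R^2: m is positive on (0,inf), and extends to a smooth
  odd function with m'(0) = 1 (here m is given directly as that odd extension on R).\<close>
definition model_profile :: "(real \<Rightarrow> real) \<Rightarrow> bool" where
  "model_profile m \<longleftrightarrow> smooth_real m \<and> (\<forall>t. m (- t) = - m t) \<and> deriv m 0 = 1
     \<and> (\<forall>t>0. m t > 0)"

definition gauss_curv :: "(real \<Rightarrow> real) \<Rightarrow> real \<Rightarrow> real" where
  "gauss_curv m t = - deriv (deriv m) t / m t"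

text \<open>Integrals of K_+ dA and of -K_- dA, with dA = m(t) dt dtheta in polar
  coordinates (t,theta) in (0,inf) x [0,2 pi).\<close>
definition total_curv_pos :: "(real \<Rightarrow> real) \<Rightarrow> ennreal" where
  "total_curv_pos m = (\<integral>\<^sup>+ x. indicator ({0<..} \<times> {0..<2*pi}) x *
      ennreal (max (gauss_curv m (fst x)) 0 * m (fst x)) \<partial>(lborel :: (real \<times> real) measure))"

definition total_curv_neg :: "(real \<Rightarrow> real) \<Rightarrow> ennreal" where
  "total_curv_neg m = (\<integral>\<^sup>+ x. indicator ({0<..} \<times> {0..<2*pi}) x *
      ennreal (- min (gauss_curv m (fst x)) 0 * m (fst x)) \<partial>(lborel :: (real \<times> real) measure))"

definition finite_total_curvature :: "(real \<Rightarrow> real) \<Rightarrow> bool" where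
  "finite_total_curvature m \<longleftrightarrow> total_curv_pos m < \<infinity> \<and> total_curv_neg m < \<infinity>"

end

theory Submission
  imports Defs
begin

theorem lemma4p1:
  fixes m :: "real \<Rightarrow> real"
  assumes "model_profile m"
    and "\<forall>t>0. gauss_curv m t \<le> 0"
    and "(\<integral>\<^sup>+ t. indicator {0<..} t * ennreal (- (t * gauss_curv m t)) \<partial>lborel) < \<infinity>"
  shows "finite_total_curvature m"
proof -
  define m1 where "m1 = deriv m"
  define m2 where "m2 = deriv m1"
  have sm: "\<And>n x. ((deriv ^^ n) m) differentiable (at x)" and odd: "\<And>t. m (-t) = - m t"
    and d0: "m1 0 = 1" and mpos: "\<And>t. t > 0 \<Longrightarrow> m t > 0"
    using assms(1) unfolding model_profile_def smooth_real_def m1_def by auto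
  have D0: "\<And>x. (m has_real_derivative m1 x) (at x)"
    using sm[of 0] unfolding m1_def by (simp add: DERIV_deriv_iff_real_differentiable)
  have D1: "\<And>x. (m1 has_real_derivative m2 x) (at x)"
    using sm[of 1] unfolding m1_def m2_def by (simp add: DERIV_deriv_iff_real_differentiable)
  have D2: "\<And>x. isCont m2 x"
    using sm[of 2] unfolding m1_def m2_def by (simp add: numeral_2_eq_2 differentiable_imp_continuous_within)
  have cm: "continuous_on UNIV m" using D0 by (meson DERIV_isCont continuous_at_imp_continuous_on)
  have cm1: "continuous_on UNIV m1" using D1 by (meson DERIV_isCont continuous_at_imp_continuous_on)
  have cm2: "continuous_on UNIV m2" using D2 by (simp add: continuous_at_imp_continuous_on)
  have m0: "m 0 = 0" using odd[of 0] by simp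
  have K: "\<And>t. gauss_curv m t = - m2 t / m t" unfolding gauss_curv_def m2_def m1_def by simp
  have m2nn: "\<And>t. t > 0 \<Longrightarrow> m2 t \<ge> 0"
  proof -
    fix t :: real assume t: "t > 0"
    have "- m2 t / m t \<le> 0" using assms(2) t K by auto
    thus "m2 t \<ge> 0" using mpos[OF t] by (simp add: zero_le_divide_iff)
  qed
  have m1mono: "\<And>a b. 0 \<le> a \<Longrightarrow> a \<le> b \<Longrightarrow> m1 a \<le> m1 b"
  proof -
    fix a b :: real assume ab: "0 \<le> a" "a \<le> b"
    show "m1 a \<le> m1 b"
    proof (rule DERIV_nonneg_imp_increasing_open[OF ab(2)])
      fix x assume "a < x" "x < b"
      thus "\<exists>y. (m1 has_real_derivative y) (at x) \<and> 0 \<le> y" using D1 m2nn ab by (meson le_less_trans)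
    qed (use cm1 in \<open>auto intro: continuous_on_subset\<close>)
  qed
  have m1pos: "\<And>t. t \<ge> 0 \<Longrightarrow> m1 t \<ge> 1" using m1mono[of 0] d0 by force
  have mle: "\<And>t. t > 0 \<Longrightarrow> m t \<le> t * m1 t"
  proof -
    fix t :: real assume t: "t > 0"
    obtain z where z: "0 < z" "z < t" "m t - m 0 = (t - 0) * m1 z"
      using MVT2[OF t, of m m1] D0 by blast
    show "m t \<le> t * m1 t" using z m0 m1mono[of z t] t by (simp add: mult_left_mono)
  qed
  define X where "X = (\<integral>\<^sup>+ t. indicator {0<..} t * ennreal (- (t * gauss_curv m t)) \<partial>lborel)"
  have Xfin: "X < \<infinity>" using assms(3) unfolding X_def .
  define C where "C = enn2real X"
  define w where "w t = t * m2 t / m t" for t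
  have wK: "\<And>t. t > 0 \<Longrightarrow> w t = - (t * gauss_curv m t)" unfolding w_def K by simp
  have wnn: "\<And>t. t > 0 \<Longrightarrow> w t \<ge> 0" unfolding w_def using m2nn mpos by (metis divide_nonneg_pos less_imp_le mult_nonneg_nonneg)
  have wc: "continuous_on {a..b} w" if a: "a > 0" for a b
  proof -
    have c2: "continuous_on {a..b} m2" by (rule continuous_on_subset[OF cm2]) simp
    have c0: "continuous_on {a..b} m" by (rule continuous_on_subset[OF cm]) simp
    have nz: "\<forall>x\<in>{a..b}. m x \<noteq> 0" using mpos a by (metis atLeastAtMost_iff less_le_trans less_irrefl)
    show ?thesis unfolding w_def
      by (rule continuous_on_divide[OF continuous_on_mult[OF continuous_on_id c2] c0 nz])
  qed
  have Wle: "integral {1..t} w \<le> C" if t: "t \<ge> 1" for t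
  proof -
    have "continuous_on {1..t} w" using wc[of 1 t] by simp
    hence hi: "(w has_integral integral {1..t} w) {1..t}"
      using integrable_continuous_interval by blast
    have I0: "integral {1..t} w \<ge> 0" using wnn by (intro has_integral_nonneg[OF hi]) auto
    have "ennreal (integral {1..t} w) = (\<integral>\<^sup>+ x. ennreal (w x) * indicator {1..t} x \<partial>lborel)"
      by (rule nn_integral_has_integral_lebesgue'[OF _ hi, symmetric]) (use wnn in auto)
    also have "\<dots> \<le> X" unfolding X_def
      by (intro nn_integral_mono) (auto simp: indicator_def wK)
    finally have "ennreal (integral {1..t} w) \<le> X" .
    from enn2real_mono[OF this] Xfin I0 show ?thesis unfolding C_def by simp
  qed
  have bound: "m1 t \<le> m1 1 * exp C" if t: "t \<ge> 1" for t
  proof -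
    have pos: "\<And>s. s \<in> {1..t} \<Longrightarrow> m1 s > 0" using m1pos by (meson atLeastAtMost_iff less_le_trans order.trans zero_le_one zero_less_one)
    have FT: "((\<lambda>s. m2 s / m1 s) has_integral (ln (m1 t) - ln (m1 1))) {1..t}"
    proof (rule fundamental_theorem_of_calculus[OF t])
      fix x assume x: "x \<in> {1..t}"
      have "((\<lambda>s. ln (m1 s)) has_real_derivative (1 / m1 x * m2 x)) (at x)"
        by (rule DERIV_chain2[OF DERIV_ln_divide[OF pos[OF x]] D1])
      thus "((\<lambda>s. ln (m1 s)) has_vector_derivative m2 x / m1 x) (at x within {1..t})"
        by (simp add: has_real_derivative_iff_has_vector_derivative[symmetric] has_field_derivative_at_within)
    qed
    have "continuous_on {1..t} w" using wc[of 1 t] by simp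
    hence wi: "w integrable_on {1..t}" using integrable_continuous_interval by blast
    have "ln (m1 t) - ln (m1 1) = integral {1..t} (\<lambda>s. m2 s / m1 s)" using FT by (simp add: integral_unique)
    also have "\<dots> \<le> integral {1..t} w"
    proof (rule integral_le[OF has_integral_integrable[OF FT] wi])
      fix s assume s: "s \<in> {1..t}"
      have sp: "s > 0" using s by auto
      have a: "m s \<le> s * m1 s" using mle[OF sp] .
      have "m2 s * m s \<le> m2 s * (s * m1 s)" using mult_left_mono[OF a m2nn[OF sp]] .
      thus "m2 s / m1 s \<le> w s" unfolding w_def using pos[OF s] mpos[OF sp]
        by (simp add: divide_simps mult.commute mult.left_commute)
    qed
    also have "\<dots> \<le> C" using Wle[OF t] .
    finally have "ln (m1 t) \<le> ln (m1 1) + C" by simp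
    hence "exp (ln (m1 t)) \<le> exp (ln (m1 1) + C)" by simp
    thus ?thesis using pos[of t] pos[of 1] t by (simp add: exp_add)
  qed
  define B where "B = m1 1 * exp C"
  have mB: "m x \<le> B * x" if "x \<ge> 1" for x
  proof -
    have "x * m1 x \<le> x * B" unfolding B_def using bound[OF that] that by (intro mult_left_mono) auto
    moreover have "m x \<le> x * m1 x" using mle[of x] that by simp
    ultimately have "m x \<le> x * B" by linarith
    thus ?thesis by (simp add: mult.commute)
  qed
  have Bnn: "B \<ge> 0" unfolding B_def using m1pos[of 1] by simp
  obtain M0 where M0: "\<And>x. x \<in> {0..1} \<Longrightarrow> m2 x \<le> M0"
  proof -
    have "bounded (m2 ` {0..1})"
      by (rule compact_imp_bounded[OF compact_continuous_image[OF continuous_on_subset[OF cm2] compact_Icc]]) simp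
    then obtain a where "\<forall>y\<in>m2 ` {0..1}. \<bar>y\<bar> \<le> a" unfolding bounded_real by blast
    thus ?thesis using that by (meson abs_le_D1 image_eqI)
  qed
  have [measurable]: "m2 \<in> borel_measurable borel" by (rule borel_measurable_continuous_onI[OF cm2])
  have [measurable]: "m \<in> borel_measurable borel" by (rule borel_measurable_continuous_onI[OF cm])
  have Km[measurable]: "gauss_curv m \<in> borel_measurable borel"
  proof -
    have "(\<lambda>t. - m2 t / m t) \<in> borel_measurable borel" by measurable
    moreover have "gauss_curv m = (\<lambda>t. - m2 t / m t)" using K by auto
    ultimately show ?thesis by simp
  qed
  define h where "h x = - min (gauss_curv m x) 0 * m x" for x
  have hm[measurable]: "h \<in> borel_measurable borel" unfolding h_def by measurable
  define F where "F x = ennreal M0 * indicator {0<..1} x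
      + ennreal B * (indicator {0<..} x * ennreal (- (x * gauss_curv m x)))" for x :: real
  have hpt: "indicator {0<..} x * ennreal (h x) \<le> F x" for x
  proof (cases "x > 0")
    case False thus ?thesis by (simp add: indicator_def)
  next
    case True
    have hx: "h x = m2 x" unfolding h_def using assms(2) True mpos[OF True] K[of x] by auto
    show ?thesis
    proof (cases "x \<le> 1")
      case True
      with \<open>x > 0\<close> have "h x \<le> M0" using hx M0[of x] by auto
      hence "ennreal (h x) \<le> ennreal M0" by (rule ennreal_leI)
      thus ?thesis unfolding F_def using True \<open>x > 0\<close> by (simp add: indicator_def add_increasing2)
    next
      case False
      have Kn: "- gauss_curv m x \<ge> 0" using assms(2) \<open>x > 0\<close> by auto
      have "h x = (- gauss_curv m x) * m x" unfolding h_def using assms(2) \<open>x > 0\<close> by auto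
      also have "\<dots> \<le> (- gauss_curv m x) * (B * x)" using mB[of x] False Kn by (intro mult_left_mono) auto
      also have "\<dots> = B * (- (x * gauss_curv m x))" by simp
      finally have "ennreal (h x) \<le> ennreal B * ennreal (- (x * gauss_curv m x))"
        using Bnn by (simp add: ennreal_mult'[symmetric] ennreal_leI)
      thus ?thesis unfolding F_def using False \<open>x > 0\<close> by (simp add: indicator_def add_increasing)
    qed
  qed
  have Hfin: "(\<integral>\<^sup>+ x. indicator {0<..} x * ennreal (h x) \<partial>lborel) < \<infinity>"
  proof -
    have "(\<integral>\<^sup>+ x. indicator {0<..} x * ennreal (h x) \<partial>lborel) \<le> integral\<^sup>N lborel F"
      by (rule nn_integral_mono) (use hpt in auto)
    also have "integral\<^sup>N lborel F = ennreal M0 * emeasure lborel {0<..1::real} + ennreal B * X"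
      unfolding F_def X_def
      by (subst nn_integral_add, measurable, subst nn_integral_cmult, measurable,
          subst nn_integral_cmult_indicator, auto)
    also have "\<dots> < \<infinity>" using Xfin by (simp add: ennreal_mult_less_top)
    finally show ?thesis .
  qed
  have neg: "total_curv_neg m = (\<integral>\<^sup>+ x. indicator {0<..} x * ennreal (h x) \<partial>lborel) * ennreal (2*pi)"
  proof -
    have "total_curv_neg m = (\<integral>\<^sup>+ x. indicator ({0<..} \<times> {0..<2*pi}) x * ennreal (h (fst x)) \<partial>(lborel \<Otimes>\<^sub>M lborel))"
      unfolding total_curv_neg_def h_def lborel_prod ..
    also have "\<dots> = (\<integral>\<^sup>+ x. \<integral>\<^sup>+ y. indicator ({0<..} \<times> {0..<2*pi}) (x, y) * ennreal (h x) \<partial>lborel \<partial>lborel)"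
    proof -
      have "(\<lambda>x::real\<times>real. indicator ({0<..} \<times> {0..<2*pi}) x * ennreal (h (fst x))) \<in> borel_measurable (lborel \<Otimes>\<^sub>M lborel)"
        by measurable
      from lborel.nn_integral_fst[OF this] show ?thesis by simp
    qed
    also have "\<dots> = (\<integral>\<^sup>+ x. (indicator {0<..} x * ennreal (h x)) * ennreal (2*pi) \<partial>lborel)"
    proof (rule nn_integral_cong)
      fix x :: real
      have "(\<integral>\<^sup>+ y. indicator ({0<..} \<times> {0..<2*pi}) (x, y) * ennreal (h x) \<partial>lborel)
          = (\<integral>\<^sup>+ y. (indicator {0<..} x * ennreal (h x)) * indicator {0..<2*pi} y \<partial>lborel)"
        by (rule nn_integral_cong) (simp add: indicator_times mult_ac)
      also have "\<dots> = (indicator {0<..} x * ennreal (h x)) * ennreal (2*pi)"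
        by (subst nn_integral_cmult_indicator) auto
      finally show "(\<integral>\<^sup>+ y. indicator ({0<..} \<times> {0..<2*pi}) (x, y) * ennreal (h x) \<partial>lborel)
          = (indicator {0<..} x * ennreal (h x)) * ennreal (2*pi)" .
    qed
    also have "\<dots> = (\<integral>\<^sup>+ x. indicator {0<..} x * ennreal (h x) \<partial>lborel) * ennreal (2*pi)"
      by (rule nn_integral_multc) measurable
    finally show ?thesis .
  qed
  have pos: "total_curv_pos m = 0"
  proof -
    have "total_curv_pos m = (\<integral>\<^sup>+ x. 0 \<partial>(lborel :: (real \<times> real) measure))"
      unfolding total_curv_pos_def
      by (rule nn_integral_cong) (use assms(2) in \<open>auto simp: indicator_def max_def\<close>)
    thus ?thesis by simp
  qed
  show ?thesis unfolding finite_total_curvature_def pos neg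
    using Hfin by (simp add: ennreal_mult_less_top)
qed

end
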